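(* Let $G$ be a finite simple graph with adjacency matrix $A$. Then every realization of $G$ by Pauli strings uses strings of length at least $\operatorname{rank}_{\mathbb{F}_2}(A)/2$, and there exists a realization of $G$ by Pauli strings of length exactly $\operatorname{rank}_{\mathbb{F}_2}(A)/2$.
   Context: $\operatorname{rank}_{\mathbb{F}_2}(A)$ is the rank of the $0/1$ matrix $A$ over the field with two elements (it is even since $A$ is symmetric with zero diagonal). A Pauli string of length $\ell$ is a tensor product of $\ell$ matrices from $\{I,X,Y,Z\}$. A realization of $G$ on $\{1,\dots,n\}$ is a tuple $(S_1,\dots,S_n)$ of Pauli strings of a common length with $S_iS_j=-S_jS_i$ if $i\sim j$ and $S_iS_j=S_jS_i$ otherwise. *)

theory Defs
  imports "HOL-Analysis.Analysis" "HOL-Library.Z2"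
begin

text \<open>Single-qubit Pauli matrices, as 2x2 complex matrices indexed by bool (False = 0, True = 1).\<close>
datatype pauli = PI | PX | PY | PZ

fun pauli_mat :: "pauli \<Rightarrow> bool \<Rightarrow> bool \<Rightarrow> complex" where
  "pauli_mat PI a b = (if a = b then 1 else 0)"
| "pauli_mat PX a b = (if a \<noteq> b then 1 else 0)"
| "pauli_mat PY a b = (if a = b then 0 else if a then \<i> else - \<i>)"
| "pauli_mat PZ a b = (if a = b then (if a then -1 else 1) else 0)"

text \<open>Basis of (C^2)^(tensor l): bit strings of length l.\<close>
definition bitstrings :: "nat \<Rightarrow> bool list set" where
  "bitstrings l = {x. length x = l}"

text \<open>The 2^l x 2^l matrix of a Pauli string (tensor product of its factors).\<close>
definition pauli_string_mat :: "pauli list \<Rightarrow> bool list \<Rightarrow> bool list \<Rightarrow> complex" where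
  "pauli_string_mat ps x y = (\<Prod>k<length ps. pauli_mat (ps ! k) (x ! k) (y ! k))"

definition mat_mult_l :: "nat \<Rightarrow> (bool list \<Rightarrow> bool list \<Rightarrow> complex)
    \<Rightarrow> (bool list \<Rightarrow> bool list \<Rightarrow> complex) \<Rightarrow> bool list \<Rightarrow> bool list \<Rightarrow> complex" where
  "mat_mult_l l M N x y = (\<Sum>z\<in>bitstrings l. M x z * N z y)"

definition anticommute :: "nat \<Rightarrow> pauli list \<Rightarrow> pauli list \<Rightarrow> bool" where
  "anticommute l P Q \<longleftrightarrow> (\<forall>x\<in>bitstrings l. \<forall>y\<in>bitstrings l.
     mat_mult_l l (pauli_string_mat P) (pauli_string_mat Q) x y
       = - mat_mult_l l (pauli_string_mat Q) (pauli_string_mat P) x y)"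

definition commute :: "nat \<Rightarrow> pauli list \<Rightarrow> pauli list \<Rightarrow> bool" where
  "commute l P Q \<longleftrightarrow> (\<forall>x\<in>bitstrings l. \<forall>y\<in>bitstrings l.
     mat_mult_l l (pauli_string_mat P) (pauli_string_mat Q) x y
       = mat_mult_l l (pauli_string_mat Q) (pauli_string_mat P) x y)"

definition pauli_realization :: "('n \<Rightarrow> 'n \<Rightarrow> bool) \<Rightarrow> nat \<Rightarrow> ('n \<Rightarrow> pauli list) \<Rightarrow> bool" where
  "pauli_realization E l S \<longleftrightarrow> (\<forall>i. length (S i) = l) \<and>
     (\<forall>i j. (E i j \<longrightarrow> anticommute l (S i) (S j)) \<and> (\<not> E i j \<longrightarrow> commute l (S i) (S j)))"

definition adj_matrix :: "('n::finite \<Rightarrow> 'n \<Rightarrow> bool) \<Rightarrow> bit^'n^'n" where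
  "adj_matrix E = (\<chi> i j. if E i j then 1 else 0)"

end

theory Submission imports Defs begin

fun px :: "pauli \<Rightarrow> bit" where
  "px PI = 0" | "px PX = 1" | "px PY = 1" | "px PZ = 0"
fun pz :: "pauli \<Rightarrow> bit" where
  "pz PI = 0" | "pz PX = 0" | "pz PY = 1" | "pz PZ = 1"

definition w1 :: "pauli \<Rightarrow> pauli \<Rightarrow> bit" where
  "w1 p q = px p * pz q + pz p * px q"

definition sgnb :: "bit \<Rightarrow> complex" where
  "sgnb b = (if b = 0 then 1 else -1)"

lemma sgnb_add: "sgnb (a + b) = sgnb a * sgnb b"
  by (cases a; cases b) (auto simp: sgnb_def)

definition pm2 :: "pauli \<Rightarrow> pauli \<Rightarrow> bool \<Rightarrow> bool \<Rightarrow> complex" where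
  "pm2 p q a c = pauli_mat p a False * pauli_mat q False c + pauli_mat p a True * pauli_mat q True c"

lemma single: "pm2 p q a c = sgnb (w1 p q) * pm2 q p a c"
  by (cases p; cases q; cases a; cases c) (simp_all add: pm2_def sgnb_def w1_def)

lemma single_nz: "\<exists>c. pm2 p q False c \<noteq> 0"
  by (cases p; cases q) (auto simp: pm2_def)

lemma bitstrings_Suc: "bitstrings (Suc l) = (\<lambda>(b,z). b # z) ` (UNIV \<times> bitstrings l)"
  unfolding bitstrings_def
  apply (auto simp: image_iff)
  by (metis length_Suc_conv)

lemma psm_Cons: "pauli_string_mat (p # P) (a # x) (b # y) = pauli_mat p a b * pauli_string_mat P x y"
  unfolding pauli_string_mat_def length_Cons prod.lessThan_Suc_shift by simp

lemma tensor:
  "length P = l \<Longrightarrow> length Q = l \<Longrightarrow> x \<in> bitstrings l \<Longrightarrow> y \<in> bitstrings l \<Longrightarrow>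
   mat_mult_l l (pauli_string_mat P) (pauli_string_mat Q) x y = (\<Prod>k<l. pm2 (P!k) (Q!k) (x!k) (y!k))"
proof (induction l arbitrary: P Q x y)
  case 0
  then show ?case by (simp add: mat_mult_l_def bitstrings_def pauli_string_mat_def)
next
  case (Suc l)
  obtain p P' where P: "P = p # P'" "length P' = l" using Suc.prems by (cases P) auto
  obtain q Q' where Q: "Q = q # Q'" "length Q' = l" using Suc.prems by (cases Q) auto
  obtain a x' where x: "x = a # x'" "x' \<in> bitstrings l" using Suc.prems by (cases x) (auto simp: bitstrings_def)
  obtain c y' where y: "y = c # y'" "y' \<in> bitstrings l" using Suc.prems by (cases y) (auto simp: bitstrings_def)
  have inj: "inj_on (\<lambda>(b,z). b # z) (UNIV \<times> bitstrings l)" by (auto simp: inj_on_def)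
  have "mat_mult_l (Suc l) (pauli_string_mat P) (pauli_string_mat Q) x y
      = (\<Sum>(b,z)\<in>UNIV \<times> bitstrings l. pauli_string_mat P x (b#z) * pauli_string_mat Q (b#z) y)"
    unfolding mat_mult_l_def bitstrings_Suc by (subst sum.reindex[OF inj]) (simp add: case_prod_unfold)
  also have "\<dots> = (\<Sum>b\<in>UNIV. \<Sum>z\<in>bitstrings l. pauli_string_mat P x (b#z) * pauli_string_mat Q (b#z) y)"
    by (subst sum.cartesian_product) (simp add: case_prod_unfold)
  also have "\<dots> = (\<Sum>b\<in>UNIV. \<Sum>z\<in>bitstrings l. (pauli_mat p a b * pauli_mat q b c) *
        (pauli_string_mat P' x' z * pauli_string_mat Q' z y'))"
    by (simp add: P(1) Q(1) x(1) y(1) psm_Cons mult_ac)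
  also have "\<dots> = (\<Sum>b\<in>UNIV. pauli_mat p a b * pauli_mat q b c) * mat_mult_l l (pauli_string_mat P') (pauli_string_mat Q') x' y'"
    by (simp add: mat_mult_l_def sum_distrib_left sum_distrib_right, rule sum.swap)
  also have "\<dots> = pm2 p q a c * (\<Prod>k<l. pm2 (P'!k) (Q'!k) (x'!k) (y'!k))"
    using Suc.IH[OF P(2) Q(2) x(2) y(2)] by (simp add: pm2_def UNIV_bool add.commute)
  also have "\<dots> = (\<Prod>k<Suc l. pm2 (P!k) (Q!k) (x!k) (y!k))"
    unfolding prod.lessThan_Suc_shift by (simp add: P Q x y)
  finally show ?case .
qed

definition symp :: "pauli list \<Rightarrow> pauli list \<Rightarrow> bit" where
  "symp P Q = (\<Sum>k<length P. w1 (P!k) (Q!k))"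

lemma sgnb_sum: "sgnb (\<Sum>k<(l::nat). f k) = (\<Prod>k<l. sgnb (f k))"
proof (induction l)
  case 0 then show ?case by (simp add: sgnb_def)
next
  case (Suc l) then show ?case by (simp only: sum.lessThan_Suc prod.lessThan_Suc sgnb_add)
qed

lemma comm_rel:
  assumes "length P = l" "length Q = l" "x \<in> bitstrings l" "y \<in> bitstrings l"
  shows "mat_mult_l l (pauli_string_mat P) (pauli_string_mat Q) x y
    = sgnb (symp P Q) * mat_mult_l l (pauli_string_mat Q) (pauli_string_mat P) x y"
proof -
  have "mat_mult_l l (pauli_string_mat P) (pauli_string_mat Q) x y = (\<Prod>k<l. pm2 (P!k) (Q!k) (x!k) (y!k))"
    using tensor assms by blast
  also have "\<dots> = (\<Prod>k<l. sgnb (w1 (P!k) (Q!k)) * pm2 (Q!k) (P!k) (x!k) (y!k))"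
    by (rule prod.cong[OF refl], rule single)
  also have "\<dots> = sgnb (symp P Q) * (\<Prod>k<l. pm2 (Q!k) (P!k) (x!k) (y!k))"
    by (simp add: prod.distrib symp_def sgnb_sum assms)
  also have "(\<Prod>k<l. pm2 (Q!k) (P!k) (x!k) (y!k)) = mat_mult_l l (pauli_string_mat Q) (pauli_string_mat P) x y"
    using tensor assms by metis
  finally show ?thesis .
qed

lemma nz:
  assumes "length P = l" "length Q = l"
  shows "\<exists>x\<in>bitstrings l. \<exists>y\<in>bitstrings l. mat_mult_l l (pauli_string_mat P) (pauli_string_mat Q) x y \<noteq> 0"
proof -
  define cf where "cf k = (SOME c. pm2 (P!k) (Q!k) False c \<noteq> 0)" for k
  have cf: "pm2 (P!k) (Q!k) False (cf k) \<noteq> 0" for k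
    unfolding cf_def using single_nz by (rule someI_ex)
  define x where "x = replicate l False"
  define y where "y = map cf [0..<l]"
  have xy: "x \<in> bitstrings l" "y \<in> bitstrings l" by (auto simp: x_def y_def bitstrings_def)
  have "mat_mult_l l (pauli_string_mat P) (pauli_string_mat Q) x y = (\<Prod>k<l. pm2 (P!k) (Q!k) (x!k) (y!k))"
    using tensor assms xy by blast
  also have "\<dots> = (\<Prod>k<l. pm2 (P!k) (Q!k) False (cf k))"
    by (rule prod.cong) (auto simp: x_def y_def)
  also have "\<dots> \<noteq> 0" using cf by simp
  finally show ?thesis using xy by blast
qed

lemma bit_cases2: "(b::bit) \<noteq> 1 \<Longrightarrow> b = 0"
  by (cases b) auto

lemma real_iff:
  assumes len: "\<forall>i. length (S i) = l"
  shows "pauli_realization E l S \<longleftrightarrow> (\<forall>i j. E i j \<longleftrightarrow> symp (S i) (S j) = 1)"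
proof
  assume R: "pauli_realization E l S"
  show "\<forall>i j. E i j \<longleftrightarrow> symp (S i) (S j) = 1"
  proof (intro allI)
    fix i j
    obtain x y where xy: "x \<in> bitstrings l" "y \<in> bitstrings l"
      and ne: "mat_mult_l l (pauli_string_mat (S i)) (pauli_string_mat (S j)) x y \<noteq> 0"
      using nz len by blast
    note cr = comm_rel[of "S i" l "S j" x y, OF len[rule_format] len[rule_format] xy]
    show "E i j \<longleftrightarrow> symp (S i) (S j) = 1"
    proof
      assume e: "E i j"
      then have "anticommute l (S i) (S j)" using R unfolding pauli_realization_def by blast
      then have a: "mat_mult_l l (pauli_string_mat (S i)) (pauli_string_mat (S j)) x y
        = - mat_mult_l l (pauli_string_mat (S j)) (pauli_string_mat (S i)) x y"
        using xy unfolding anticommute_def by blast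
      show "symp (S i) (S j) = 1"
      proof (rule ccontr)
        assume "symp (S i) (S j) \<noteq> 1"
        then have "symp (S i) (S j) = 0" by (rule bit_cases2)
        then show False using a cr ne by (simp add: sgnb_def)
      qed
    next
      assume s: "symp (S i) (S j) = 1"
      show "E i j"
      proof (rule ccontr)
        assume "\<not> E i j"
        then have "commute l (S i) (S j)" using R unfolding pauli_realization_def by blast
        then have a: "mat_mult_l l (pauli_string_mat (S i)) (pauli_string_mat (S j)) x y
          = mat_mult_l l (pauli_string_mat (S j)) (pauli_string_mat (S i)) x y"
          using xy unfolding commute_def by blast
        then show False using s cr ne by (simp add: sgnb_def)
      qed
    qed
  qed
next
  assume H: "\<forall>i j. E i j \<longleftrightarrow> symp (S i) (S j) = 1"
  show "pauli_realization E l S"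
    unfolding pauli_realization_def
  proof (intro conjI allI impI)
    fix i j
    show "length (S i) = l" using len by blast
    assume "E i j"
    then have "symp (S i) (S j) = 1" using H by blast
    then show "anticommute l (S i) (S j)"
      unfolding anticommute_def using comm_rel[of "S i" l "S j", OF len[rule_format] len[rule_format]] by (simp add: sgnb_def)
  next
    fix i j
    assume "\<not> E i j"
    then have "symp (S i) (S j) = 0" using H bit_cases2 by blast
    then show "commute l (S i) (S j)"
      unfolding commute_def using comm_rel[of "S i" l "S j", OF len[rule_format] len[rule_format]] by (simp add: sgnb_def)
  qed
qed



lemma bit_double: "(y::bit) + y = 0"
  by (cases y) auto

lemma bit_nz: "(b::bit) \<noteq> 0 \<Longrightarrow> b = 1"
  by (cases b) auto

lemma bit3: "(u::bit) = (u + x + y) + (x + y)"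
  by (cases u; cases x; cases y) auto

lemma rank_le:
  fixes A :: "bit^'n^'n" and x z :: "nat \<Rightarrow> 'n \<Rightarrow> bit"
  assumes H: "\<forall>p q. A$p$q = (\<Sum>k<l. x k p * z k q + z k p * x k q)"
  shows "rank A \<le> 2*l"
proof -
  define X where "X k = vec_lambda (x k)" for k
  define Z where "Z k = vec_lambda (z k)" for k
  define T where "T = X ` {..<l} \<union> Z ` {..<l}"
  have fT: "finite T" unfolding T_def by simp
  have cT: "card T \<le> 2*l"
  proof -
    have "card T \<le> card (X ` {..<l}) + card (Z ` {..<l})" unfolding T_def by (rule card_Un_le)
    also have "\<dots> \<le> l + l" using card_image_le[of "{..<l}" X] card_image_le[of "{..<l}" Z] by simp
    finally show ?thesis by simp
  qed
  have "rows A \<subseteq> vec.span T"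
  proof
    fix r assume "r \<in> rows A"
    then obtain p where r: "r = row p A" unfolding rows_def by blast
    have "r = (\<Sum>k<l. x k p *s Z k + z k p *s X k)"
      unfolding r by (simp add: vec_eq_iff row_def H X_def Z_def)
    also have "\<dots> \<in> vec.span T"
      by (intro vec.span_sum vec.span_add vec.span_scale vec.span_base) (auto simp: T_def)
    finally show "r \<in> vec.span T" .
  qed
  then have "vec.dim (rows A) \<le> card T" using fT by (rule vec.dim_le_card)
  then show ?thesis using cT unfolding row_rank_def_gen by simp
qed

lemma decomp:
  fixes A :: "bit^'n^'n"
  assumes "\<forall>p q. A$p$q = A$q$p" "\<forall>p. A$p$p = 0"
  shows "\<exists>m x z. 2*m \<le> rank A \<and> (\<forall>p q. A$p$q = (\<Sum>k<m. x k p * z k q + z k p * x k q))"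
  using assms
proof (induction "rank A" arbitrary: A rule: less_induct)
  case less
  note sym = less.prems(1) and dg = less.prems(2)
  show ?case
  proof (cases "\<forall>p q. A$p$q = 0")
    case True
    then show ?thesis by (intro exI[of _ 0]) auto
  next
    case False
    then obtain i j where ij: "A$i$j = 1" using bit_nz by blast
    define a where "a = A$i"
    define b where "b = A$j"
    have ai: "a$i = 0" "a$j = 1" "b$i = 1" "b$j = 0"
      using ij sym dg by (auto simp: a_def b_def)
    have ap: "a$p = A$p$i" "b$p = A$p$j" for p using sym by (auto simp: a_def b_def)
    define A' :: "bit^'n^'n" where "A' = (\<chi> p q. A$p$q + a$p * b$q + b$p * a$q)"
    have A'c: "A'$p$q = A$p$q + a$p * b$q + b$p * a$q" for p q by (simp add: A'_def)
    have sym': "\<forall>p q. A'$p$q = A'$q$p" using sym by (auto simp: A'c ac_simps)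
    have dg': "\<forall>p. A'$p$p = 0" using dg by (auto simp: A'c bit_double mult.commute)
    have rowA': "A'$p = A$p + a$p *s b + b$p *s a" for p
      by (simp add: vec_eq_iff A'c)
    have sub: "rows A' \<subseteq> vec.span (rows A)"
    proof
      fix r assume "r \<in> rows A'"
      then obtain p where r: "r = A'$p" unfolding rows_def row_def by auto
      have inr: "A$k \<in> rows A" for k unfolding rows_def row_def by auto
      show "r \<in> vec.span (rows A)" unfolding r rowA' a_def b_def
        by (intro vec.span_add vec.span_scale vec.span_base inr)
    qed
    have W: "w$i = 0 \<and> w$j = 0" if "w \<in> vec.span (rows A')" for w
      using that
    proof (induction rule: vec.span_induct_alt)
      case base then show ?case by simp
    next
      case (step c x y)
      then obtain p where x: "x = A'$p" unfolding rows_def row_def by auto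
      have "A'$p$i = 0" "A'$p$j = 0"
        using ai by (auto simp: A'c ap bit_double)
      then show ?case using step x by simp
    qed
    have W2: "w$j = 0" if "w \<in> vec.span (insert b (rows A'))" for w
      using that
    proof (induction rule: vec.span_induct_alt)
      case base then show ?case by simp
    next
      case (step c x y)
      then show ?case
      proof (cases "x = b")
        case True then show ?thesis using step ai by simp
      next
        case False
        then have "x \<in> vec.span (rows A')" using step by (auto intro: vec.span_base)
        then show ?thesis using W step by simp
      qed
    qed
    have nb: "b \<notin> vec.span (rows A')" using W ai by force
    have na: "a \<notin> vec.span (insert b (rows A'))" using W2 ai by force
    have "vec.dim (insert a (insert b (rows A'))) = vec.dim (rows A') + 2"
      using nb na by (simp add: vec.dim_insert)
    moreover have "insert a (insert b (rows A')) \<subseteq> vec.span (rows A)"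
    proof -
      have "a \<in> rows A" "b \<in> rows A" unfolding a_def b_def rows_def row_def by auto
      then show ?thesis using sub vec.span_base by blast
    qed
    then have "vec.dim (insert a (insert b (rows A'))) \<le> vec.dim (rows A)"
      by (rule vec.dim_mono)
    ultimately have rk: "rank A' + 2 \<le> rank A" unfolding row_rank_def_gen by simp
    obtain m x z where m: "2*m \<le> rank A'" and dec: "\<forall>p q. A'$p$q = (\<Sum>k<m. x k p * z k q + z k p * x k q)"
      using less.hyps[of A'] rk sym' dg' by fastforce
    define x' where "x' = x(m := (\<lambda>p. a$p))"
    define z' where "z' = z(m := (\<lambda>p. b$p))"
    have "A$p$q = (\<Sum>k<Suc m. x' k p * z' k q + z' k p * x' k q)" for p q
    proof -
      have "A$p$q = A'$p$q + (a$p * b$q + b$p * a$q)"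
        unfolding A'c by (rule bit3)
      also have "A'$p$q = (\<Sum>k<m. x' k p * z' k q + z' k p * x' k q)"
        unfolding dec[rule_format] x'_def z'_def by (rule sum.cong) auto
      finally show ?thesis by (simp add: x'_def z'_def)
    qed
    moreover have "2 * Suc m \<le> rank A" using m rk by simp
    ultimately show ?thesis by blast
  qed
qed


definition pof :: "bit \<Rightarrow> bit \<Rightarrow> pauli" where
  "pof a b = (if a = 0 then (if b = 0 then PI else PZ) else (if b = 0 then PX else PY))"

lemma px_pof: "px (pof a b) = a" and pz_pof: "pz (pof a b) = b"
  by (cases a; cases b; simp add: pof_def)+

lemma bit_if: "(if (s::bit) = 1 then 1 else 0) = s"
  by (cases s) auto

theorem theorem6:
  fixes E :: "'n::finite \<Rightarrow> 'n \<Rightarrow> bool"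
  assumes sym: "\<And>i j. E i j \<Longrightarrow> E j i"
    and irrefl: "\<And>i. \<not> E i i"
  shows "(\<forall>l S. pauli_realization E l S \<longrightarrow> real (rank (adj_matrix E)) / 2 \<le> real l)
       \<and> (\<exists>l S. 2 * l = rank (adj_matrix E) \<and> pauli_realization E l S)"
proof
  have P1: "rank (adj_matrix E) \<le> 2 * l" if R: "pauli_realization E l S" for l S
  proof -
    have len: "\<forall>i. length (S i) = l" using R unfolding pauli_realization_def by blast
    have iff: "\<forall>i j. E i j \<longleftrightarrow> symp (S i) (S j) = 1" by (rule iffD1[OF real_iff[OF len] R])
    show ?thesis
    proof (rule rank_le[where x = "\<lambda>k p. px (S p ! k)" and z = "\<lambda>k p. pz (S p ! k)"])
      show "\<forall>p q. adj_matrix E $ p $ q = (\<Sum>k<l. px (S p ! k) * pz (S q ! k) + pz (S p ! k) * px (S q ! k))"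
      proof (intro allI)
      fix p q
      have "adj_matrix E $ p $ q = symp (S p) (S q)"
        unfolding adj_matrix_def using iff bit_if by simp
      also have "\<dots> = (\<Sum>k<l. px (S p ! k) * pz (S q ! k) + pz (S p ! k) * px (S q ! k))"
        using len by (simp add: symp_def w1_def)
      finally show "adj_matrix E $ p $ q = (\<Sum>k<l. px (S p ! k) * pz (S q ! k) + pz (S p ! k) * px (S q ! k))" .
    qed
    qed
  qed
  show "\<forall>l S. pauli_realization E l S \<longrightarrow> real (rank (adj_matrix E)) / 2 \<le> real l"
  proof (intro allI impI)
    fix l S assume "pauli_realization E l S"
    then have "rank (adj_matrix E) \<le> 2 * l" by (rule P1)
    then show "real (rank (adj_matrix E)) / 2 \<le> real l" by simp
  qed
  have "\<forall>p q. adj_matrix E $ p $ q = adj_matrix E $ q $ p" using sym by (auto simp: adj_matrix_def)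
  moreover have "\<forall>p. adj_matrix E $ p $ p = 0" using irrefl by (auto simp: adj_matrix_def)
  ultimately obtain m x z where m: "2*m \<le> rank (adj_matrix E)"
    and dec: "\<forall>p q. adj_matrix E $ p $ q = (\<Sum>k<m. x k p * z k q + z k p * x k q)"
    using decomp by blast
  define S where "S i = map (\<lambda>k. pof (x k i) (z k i)) [0..<m]" for i
  have len: "\<forall>i. length (S i) = m" by (simp add: S_def)
  have "\<forall>i j. E i j \<longleftrightarrow> symp (S i) (S j) = 1"
  proof (intro allI)
    fix i j
    have "symp (S i) (S j) = (\<Sum>k<m. x k i * z k j + z k i * x k j)"
      unfolding symp_def using len by (intro sum.cong) (auto simp: S_def w1_def px_pof pz_pof)
    also have "\<dots> = adj_matrix E $ i $ j" using dec by simp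
    finally show "E i j \<longleftrightarrow> symp (S i) (S j) = 1" by (simp add: adj_matrix_def)
  qed
  then have R: "pauli_realization E m S" by (rule iffD2[OF real_iff[OF len]])
  then have "rank (adj_matrix E) \<le> 2 * m" by (rule P1)
  then have "2 * m = rank (adj_matrix E)" using m by simp
  then show "\<exists>l S. 2 * l = rank (adj_matrix E) \<and> pauli_realization E l S" using R by blast
qed

end
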